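(* Let $\lambda<0$ and let $p(x;\theta)=(1+\lambda\,\theta\cdot F(x))_+^{1/\lambda}e^{-\varphi(\theta)}$, $\theta\in\Theta\subset\mathbb{R}^d$, be a $\lambda$-exponential family on a state space $\mathcal{X}$ with reference measure $\nu$, satisfying the standing assumptions described in the context. Let $x_1,\ldots,x_n\in\mathcal{S}$ be data points and put $y_i=F(x_i)\in\mathbb{R}^d$. If $\hat\theta\in\Theta$ is a maximum likelihood estimate, i.e. $\hat\theta$ maximizes $$\ell(\theta)=\sum_{i=1}^n\Big(\tfrac{1}{\lambda}\log(1+\lambda\,\theta\cdot y_i)-\varphi(\theta)\Big)$$ over $\Theta$, then $\hat\eta:=\nabla^{(\lambda)}\varphi(\hat\theta)$ satisfies $$\hat\eta=\sum_{i=1}^n w_i(\hat\theta)\,y_i,\qquad w_i(\theta):=\frac{1/(1+\lambda\,\theta\cdot y_i)}{\sum_{j=1}^n 1/(1+\lambda\,\theta\cdot y_j)},\quad i=1,\ldots,n.$$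
   Context: Setting: $\mathcal{X}$ is a state space with reference measure $\nu$, $\lambda\in\mathbb{R}\setminus\{0\}$ is fixed, $F=(F_1,\ldots,F_d):\mathcal{X}\to\mathbb{R}^d$ is a vector of statistics, $z_+=\max\{z,0\}$, and the $\lambda$-exponential family is $p(x;\theta)=(1+\lambda\theta\cdot F(x))_+^{1/\lambda}e^{-\varphi(\theta)}$, where the potential $\varphi(\theta)$ is defined by the normalization $\int_{\mathcal{X}}p(x;\theta)\,d\nu(x)=1$. The $\lambda$-gradient of a differentiable function $f$ is $\nabla^{(\lambda)}f(\theta):=\nabla f(\theta)/(1-\lambda\nabla f(\theta)\cdot\theta)$. The $\lambda$-conjugate of $f$ is $f^{(\lambda)}(y)=\sup_x\{\frac1\lambda\log(1+\lambda x\cdot y)-f(x)\}$. Standing assumptions: $\lambda<0$; $\Theta=\{\theta\in\mathbb{R}^d:\int(1+\lambda\theta\cdot F(x))_+^{1/\lambda}d\nu(x)<\infty\}$ is the natural parameter set; the family satisfies the regularity condition of Wong and Zhang (2022, Condition III.10), under which $\varphi$ is differentiable on $\Theta$ with $1-\lambda\nabla\varphi(\theta)\cdot\theta>0$, the dual potential $\psi(\eta):=\sup_{\theta'\in\Theta}\{\frac1\lambda\log(1+\lambda\theta'\cdot\eta)-\varphi(\theta')\}$ is such that $\frac1\lambda(e^{\lambda\psi}-1)$ is strictly convex on $\Xi$, and $\nabla^{(\lambda)}\varphi:\Theta\to\Xi$ is a diffeomorphism with inverse $\nabla^{(\lambda)}\psi$; moreover the dual parameter set $\Xi:=\nabla^{(\lambda)}\varphi(\Theta)$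 is convex and contains the common support $\mathcal{S}:=\{x\in\mathcal{X}:p(x;\theta)>0\}$ of the family. *)

theory Defs
  imports "HOL-Analysis.Analysis"
begin

text \<open>For lam < 0 and base 0 the value is 0 (Isabelle: 0 powr a = 0), which is the
  standard convention: outside the support the density vanishes.\<close>
definition lexp_base :: "real \<Rightarrow> ('a \<Rightarrow> 'v::euclidean_space) \<Rightarrow> 'v \<Rightarrow> 'a \<Rightarrow> real" where
  "lexp_base lam F \<theta> x = (max (1 + lam * (\<theta> \<bullet> F x)) 0) powr (1 / lam)"

definition nat_params :: "real \<Rightarrow> 'a measure \<Rightarrow> ('a \<Rightarrow> 'v::euclidean_space) \<Rightarrow> 'v set" where
  "nat_params lam \<nu> F = {\<theta>. (\<integral>\<^sup>+ x. ennreal (lexp_base lam F \<theta> x) \<partial>\<nu>) < \<infinity>}"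

definition lpot :: "real \<Rightarrow> 'a measure \<Rightarrow> ('a \<Rightarrow> 'v::euclidean_space) \<Rightarrow> 'v \<Rightarrow> real" where
  "lpot lam \<nu> F \<theta> = ln (\<integral>x. lexp_base lam F \<theta> x \<partial>\<nu>)"

definition ldens :: "real \<Rightarrow> 'a measure \<Rightarrow> ('a \<Rightarrow> 'v::euclidean_space) \<Rightarrow> 'v \<Rightarrow> 'a \<Rightarrow> real" where
  "ldens lam \<nu> F \<theta> x = lexp_base lam F \<theta> x * exp (- lpot lam \<nu> F \<theta>)"

definition grad :: "('v::euclidean_space \<Rightarrow> real) \<Rightarrow> 'v \<Rightarrow> 'v" where
  "grad f \<theta> = (SOME g. (f has_derivative (\<lambda>h. g \<bullet> h)) (at \<theta>))"

definition lgrad :: "real \<Rightarrow> ('v::euclidean_space \<Rightarrow> real) \<Rightarrow> 'v \<Rightarrow> 'v" where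
  "lgrad lam f \<theta> = (1 / (1 - lam * (grad f \<theta> \<bullet> \<theta>))) *\<^sub>R grad f \<theta>"

definition ldual :: "real \<Rightarrow> 'v set \<Rightarrow> ('v::euclidean_space \<Rightarrow> real) \<Rightarrow> 'v \<Rightarrow> real" where
  "ldual lam \<Theta> \<phi> \<eta> = (SUP \<theta>'\<in>\<Theta>. (1 / lam) * ln (1 + lam * (\<theta>' \<bullet> \<eta>)) - \<phi> \<theta>')"

definition strict_convex_on :: "'v::real_vector set \<Rightarrow> ('v \<Rightarrow> real) \<Rightarrow> bool" where
  "strict_convex_on S f \<longleftrightarrow>
     (\<forall>x\<in>S. \<forall>y\<in>S. \<forall>t::real. x \<noteq> y \<and> 0 < t \<and> t < 1 \<longrightarrow>
        f ((1 - t) *\<^sub>R x + t *\<^sub>R y) < (1 - t) * f x + t * f y)"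

text \<open>Log-likelihood of data y_0..y_(n-1) (only used where all 1 + lam theta.y_i > 0).\<close>
definition loglik :: "real \<Rightarrow> ('v::euclidean_space \<Rightarrow> real) \<Rightarrow> nat \<Rightarrow> (nat \<Rightarrow> 'v) \<Rightarrow> 'v \<Rightarrow> real" where
  "loglik lam \<phi> n y \<theta> = (\<Sum>i<n. (1 / lam) * ln (1 + lam * (\<theta> \<bullet> y i)) - \<phi> \<theta>)"

definition mle_weight :: "real \<Rightarrow> nat \<Rightarrow> (nat \<Rightarrow> 'v::euclidean_space) \<Rightarrow> 'v \<Rightarrow> nat \<Rightarrow> real" where
  "mle_weight lam n y \<theta> i =
     (1 / (1 + lam * (\<theta> \<bullet> y i))) / (\<Sum>j<n. 1 / (1 + lam * (\<theta> \<bullet> y j)))"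

end

theory Submission
  imports Defs "HOL-Analysis.Analysis"
begin

lemma grad_rep:
  fixes f :: "'v::euclidean_space \<Rightarrow> real"
  assumes "f differentiable (at t)"
  shows "(f has_derivative (\<lambda>h. grad f t \<bullet> h)) (at t)"
proof -
  obtain D where D: "(f has_derivative D) (at t)" using assms unfolding differentiable_def by blast
  then have lin: "linear D" using has_derivative_linear by blast
  define g where "g = (\<Sum>b\<in>Basis. D b *\<^sub>R b)"
  have "D h = g \<bullet> h" for h
  proof -
    have "D h = D (\<Sum>b\<in>Basis. (h \<bullet> b) *\<^sub>R b)" by (simp add: euclidean_representation)
    also have "\<dots> = (\<Sum>b\<in>Basis. (h \<bullet> b) * D b)"
      using lin by (simp add: linear_sum linear_scale)
    also have "\<dots> = g \<bullet> h" unfolding g_def by (simp add: inner_sum_right inner_commute mult.commute)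
    finally show ?thesis .
  qed
  then have "D = (\<lambda>h. g \<bullet> h)" by auto
  with D have "\<exists>g. (f has_derivative (\<lambda>h. g \<bullet> h)) (at t)" by blast
  then show ?thesis unfolding grad_def by (rule someI_ex)
qed

theorem proposition1:
  fixes lam :: real and \<nu> :: "'a measure" and F :: "'a \<Rightarrow> 'v::euclidean_space"
    and S :: "'a set" and n :: nat and x :: "nat \<Rightarrow> 'a" and \<theta>hat :: 'v
  defines "\<Theta> \<equiv> nat_params lam \<nu> F"
    and "\<phi> \<equiv> lpot lam \<nu> F"
    and "\<Xi> \<equiv> lgrad lam (lpot lam \<nu> F) ` nat_params lam \<nu> F"
    and "\<psi> \<equiv> ldual lam (nat_params lam \<nu> F) (lpot lam \<nu> F)"
    and "y \<equiv> (\<lambda>i. F (x i))"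
  assumes lam_neg: "lam < 0"
    and F_meas: "F \<in> borel_measurable \<nu>"
    \<comment> \<open>standing regularity assumptions (Wong--Zhang 2022, Condition III.10)\<close>
    and Theta_open: "open \<Theta>"
    and norm_pos: "\<forall>\<theta>\<in>\<Theta>. 0 < (\<integral>x. lexp_base lam F \<theta> x \<partial>\<nu>)"
    and phi_diff: "\<forall>\<theta>\<in>\<Theta>. \<phi> differentiable (at \<theta>)"
    and phi_pos: "\<forall>\<theta>\<in>\<Theta>. 1 - lam * (grad \<phi> \<theta> \<bullet> \<theta>) > 0"
    and psi_conv: "strict_convex_on \<Xi> (\<lambda>\<eta>. (1 / lam) * (exp (lam * \<psi> \<eta>) - 1))"
    and diffeo: "bij_betw (lgrad lam \<phi>) \<Theta> \<Xi>"
      "lgrad lam \<phi> differentiable_on \<Theta>"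
      "\<forall>\<eta>\<in>\<Xi>. \<psi> differentiable (at \<eta>)"
      "lgrad lam \<psi> differentiable_on \<Xi>"
      "\<forall>\<theta>\<in>\<Theta>. lgrad lam \<psi> (lgrad lam \<phi> \<theta>) = \<theta>"
      "\<forall>\<eta>\<in>\<Xi>. lgrad lam \<phi> (lgrad lam \<psi> \<eta>) = \<eta>"
    and Xi_convex: "convex \<Xi>"
    and common_support: "\<forall>\<theta>\<in>\<Theta>. {z \<in> space \<nu>. ldens lam \<nu> F \<theta> z > 0} = S"
    and support_in_Xi: "F ` S \<subseteq> \<Xi>"
    \<comment> \<open>data and maximum likelihood estimate\<close>
    and n_pos: "0 < n"
    and data: "\<forall>i<n. x i \<in> S"
    and mle_in: "\<theta>hat \<in> \<Theta>"
    and mle_max: "\<forall>\<theta>\<in>\<Theta>. (\<forall>i<n. 0 < 1 + lam * (\<theta> \<bullet> y i)) \<longrightarrow>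
                     loglik lam \<phi> n y \<theta> \<le> loglik lam \<phi> n y \<theta>hat"
  shows "lgrad lam \<phi> \<theta>hat = (\<Sum>i<n. mle_weight lam n y \<theta>hat i *\<^sub>R y i)"
proof -
  have lamne: "lam \<noteq> 0" using lam_neg by simp
  have apos: "0 < 1 + lam * (\<theta> \<bullet> y i)" if th: "\<theta> \<in> \<Theta>" and i: "i < n" for \<theta> i
  proof -
    have "x i \<in> S" using data i by blast
    then have "ldens lam \<nu> F \<theta> (x i) > 0" using common_support th by blast
    then have "lexp_base lam F \<theta> (x i) > 0" unfolding ldens_def
      by (simp add: zero_less_mult_iff)
    then have "max (1 + lam * (\<theta> \<bullet> F (x i))) 0 \<noteq> 0" unfolding lexp_base_def by auto
    then show ?thesis unfolding y_def by (simp add: max_def split: if_splits)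
  qed
  define G where "G = grad \<phi> \<theta>hat"
  define a where "a = (\<lambda>i. 1 + lam * (\<theta>hat \<bullet> y i))"
  have ap: "\<And>i. i < n \<Longrightarrow> 0 < a i" unfolding a_def using apos mle_in by blast
  have dphi: "(\<phi> has_derivative (\<lambda>h. G \<bullet> h)) (at \<theta>hat)"
    unfolding G_def using grad_rep phi_diff mle_in by blast
  have dL: "(loglik lam \<phi> n y has_derivative
      (\<lambda>h. (\<Sum>i<n. (1 / lam) * ((lam * (h \<bullet> y i)) / a i) - G \<bullet> h))) (at \<theta>hat)"
    unfolding loglik_def
  proof (rule has_derivative_sum)
    fix i assume "i \<in> {..<n}"
    then have ai: "0 < a i" using ap by simp
    have inner: "((\<lambda>\<theta>. 1 + lam * (\<theta> \<bullet> y i)) has_derivative (\<lambda>h. lam * (h \<bullet> y i))) (at \<theta>hat)"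
      by (auto intro!: derivative_eq_intros)
    have "((\<lambda>\<theta>. ln (1 + lam * (\<theta> \<bullet> y i))) has_derivative (\<lambda>h. (lam * (h \<bullet> y i)) / a i)) (at \<theta>hat)"
      using has_derivative_ln[OF _ inner] ai unfolding a_def by (simp add: divide_inverse mult.commute)
    then show "((\<lambda>\<theta>. 1 / lam * ln (1 + lam * (\<theta> \<bullet> y i)) - \<phi> \<theta>) has_derivative
        (\<lambda>h. 1 / lam * (lam * (h \<bullet> y i) / a i) - G \<bullet> h)) (at \<theta>hat)"
      by (intro has_derivative_diff has_derivative_mult_right dphi)
  qed
  have "\<forall>\<theta>\<in>\<Theta>. loglik lam \<phi> n y \<theta> \<le> loglik lam \<phi> n y \<theta>hat"
    using mle_max apos by blast
  then have zero: "(\<lambda>h. (\<Sum>i<n. (1 / lam) * ((lam * (h \<bullet> y i)) / a i) - G \<bullet> h)) = (\<lambda>v. 0)"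
    using differential_zero_maxmin[OF mle_in Theta_open dL] by blast
  define V where "V = (\<Sum>i<n. (1 / a i) *\<^sub>R y i) - real n *\<^sub>R G"
  have "V \<bullet> h = (\<Sum>i<n. (1 / lam) * ((lam * (h \<bullet> y i)) / a i) - G \<bullet> h)" for h
    unfolding V_def using lamne
    by (simp add: inner_diff_left inner_diff_right inner_sum_left inner_sum_right sum_subtractf inner_commute)
  then have "V \<bullet> V = 0" using zero by (metis)
  then have "V = 0" by simp
  then have Geq: "real n *\<^sub>R G = (\<Sum>i<n. (1 / a i) *\<^sub>R y i)" unfolding V_def by simp
  define s where "s = (\<Sum>j<n. 1 / a j)"
  have spos: "0 < s" unfolding s_def using ap n_pos
    by (intro sum_pos) auto
  have "real n * (G \<bullet> \<theta>hat) = (\<Sum>i<n. (\<theta>hat \<bullet> y i) / a i)"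
    using arg_cong[OF Geq, of "\<lambda>v. v \<bullet> \<theta>hat"]
    by (simp add: inner_sum_left inner_sum_right inner_commute)
  then have "real n * (lam * (G \<bullet> \<theta>hat)) = (\<Sum>i<n. (a i - 1) / a i)"
    unfolding a_def by (simp add: sum_distrib_left algebra_simps)
  also have "\<dots> = (\<Sum>i<n. 1 - 1 / a i)"
    by (intro sum.cong refl) (metis ap diff_divide_distrib divide_self less_irrefl lessThan_iff)
  also have "\<dots> = real n - s" unfolding s_def by (simp add: sum_subtractf)
  finally have den: "1 - lam * (G \<bullet> \<theta>hat) = s / real n"
    using n_pos by (simp add: field_simps)
  have "lgrad lam \<phi> \<theta>hat = (1 / (s / real n)) *\<^sub>R G"
    unfolding lgrad_def G_def[symmetric] den ..
  also have "\<dots> = (1 / s) *\<^sub>R (real n *\<^sub>R G)" using n_pos by simp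
  also have "\<dots> = (\<Sum>i<n. mle_weight lam n y \<theta>hat i *\<^sub>R y i)"
    unfolding Geq mle_weight_def
    by (simp add: scaleR_sum_right divide_inverse mult.commute a_def s_def)
  finally show ?thesis .
qed

end
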